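(* Let $n,k,r,\ell$ be positive integers. Then \[S_{\geq \ell}(n,k,r)=\sum_{i=\ell-1}^{n-1}\binom{n-1}{i}\Big((k-1)\,S_{\geq \ell}(n-i-1,k-1,r)+S_{\geq \ell}(n-i-1,k,r-1)\Big),\] where the term $(k-1)S_{\geq \ell}(n-i-1,k-1,r)$ is $0$ when $k=1$.
   Context: For integers $N\ge 0$, $k\ge1$, $r\ge 0$, $\ell\ge1$, $S_{\geq \ell}(N,k,r)$ is the number of ways to partition $[N]=\{1,\dots,N\}$ into $r+k-1$ non-empty blocks, each of size at least $\ell$, where $r$ of the blocks receive the label $1$ (blocks with label $1$ are indistinguishable among themselves) and the remaining $k-1$ blocks receive the distinct labels $2,3,\dots,k$. (In particular $S_{\geq\ell}(0,1,0)=1$.) *)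

theory Defs
  imports Main "HOL-Library.Disjoint_Sets" "HOL-Library.FuncSet"
begin

text \<open>S_geq l N k r: number of pairs (P, f) where P is a set partition of {1..N}
  into non-empty blocks of size at least l, and f labels the blocks with labels in
  {1..k} such that exactly r blocks get label 1 (these are thus indistinguishable)
  and each label j in {2..k} is used on exactly one block.\<close>
definition S_geq :: "nat \<Rightarrow> nat \<Rightarrow> nat \<Rightarrow> nat \<Rightarrow> nat" where
  "S_geq l N k r = card {(P, f). partition_on {1..N} P \<and> (\<forall>B\<in>P. l \<le> card B)
      \<and> f \<in> P \<rightarrow>\<^sub>E {1..k}
      \<and> card {B\<in>P. f B = 1} = r
      \<and> (\<forall>j\<in>{2..k}. card {B\<in>P. f B = j} = 1)}"

end

theory Submission
  imports Defs
begin

definition Cset :: "nat \<Rightarrow> nat set \<Rightarrow> nat set \<Rightarrow> nat \<Rightarrow> (nat set set \<times> (nat set \<Rightarrow> nat)) set" where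
  "Cset l A K r = {(P, f). partition_on A P \<and> (\<forall>B\<in>P. l \<le> card B)
      \<and> f \<in> P \<rightarrow>\<^sub>E insert 1 K
      \<and> card {B\<in>P. f B = 1} = r
      \<and> (\<forall>j\<in>K. card {B\<in>P. f B = j} = 1)}"

function F :: "nat \<Rightarrow> nat \<Rightarrow> nat \<Rightarrow> nat \<Rightarrow> nat" where
  "F l 0 m r = (if m = 0 \<and> r = 0 then 1 else 0)"
| "F l (Suc n) m r = (\<Sum>i=l-1..n. (n choose i) * (m * F l (n-i) (m-1) r
      + (if r = 0 then 0 else F l (n-i) m (r-1))))"
  by pat_completeness auto
termination by (relation "measure (\<lambda>(l,n,m,r). n)") auto

lemma finite_Cset: "finite A \<Longrightarrow> finite K \<Longrightarrow> finite (Cset l A K r)"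
proof -
  assume a: "finite A" "finite K"
  have "Cset l A K r \<subseteq> Sigma (Pow (Pow A)) (\<lambda>P. P \<rightarrow>\<^sub>E insert 1 K)"
    by (auto simp: Cset_def partition_on_def)
  moreover have "finite (Sigma (Pow (Pow A)) (\<lambda>P. P \<rightarrow>\<^sub>E insert 1 K))"
    apply (intro finite_SigmaI finite_PiE) using a by (auto intro: finite_subset[of _ "Pow A"])
  ultimately show ?thesis by (rule finite_subset)
qed

lemma partition_remove:
  assumes "partition_on A P" "B \<in> P"
  shows "partition_on (A - B) (P - {B})"
proof (rule partition_onI)
  have U: "\<Union>P = A" using partition_onD1[OF assms(1)] by simp
  have dj: "C \<inter> B = {}" if "C \<in> P" "C \<noteq> B" for C
    using partition_onD2[OF assms(1)] assms(2) that by (simp add: disjoint_def)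
  show "\<Union>(P - {B}) = A - B"
  proof
    show "\<Union>(P - {B}) \<subseteq> A - B" using U dj by fastforce
    show "A - B \<subseteq> \<Union>(P - {B})" using U by fastforce
  qed
  show "disjnt p q" if "p \<in> P - {B}" "q \<in> P - {B}" "p \<noteq> q" for p q
    using partition_onD2[OF assms(1)] that by (simp add: pairwise_def)
  show "{} \<notin> P - {B}" using partition_onD3[OF assms(1)] by simp
qed

lemma partition_add:
  assumes "partition_on (A - B) Q" "B \<subseteq> A" "B \<noteq> {}"
  shows "partition_on A (insert B Q)"
proof (rule partition_onI)
  have U: "\<Union>Q = A - B" using partition_onD1[OF assms(1)] by simp
  then show "\<Union>(insert B Q) = A" using assms(2) by auto
  show "disjnt p q" if "p \<in> insert B Q" "q \<in> insert B Q" "p \<noteq> q" for p q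
  proof -
    have "disjnt B C" if "C \<in> Q" for C using U that by (auto simp: disjnt_def)
    moreover have "disjnt p q" if "p \<in> Q" "q \<in> Q" "p \<noteq> q"
      using partition_onD2[OF assms(1)] that by (simp add: pairwise_def)
    ultimately show ?thesis using that by (auto simp: disjnt_sym)
  qed
  show "{} \<notin> insert B Q" using partition_onD3[OF assms(1)] assms(3) by simp
qed

lemma Cset_empty: "Cset l {} K r = (if K = {} \<and> r = 0 then {({}, \<lambda>_. undefined)} else {})"
proof -
  have "(P,f) \<in> Cset l {} K r \<longleftrightarrow> P = {} \<and> f = (\<lambda>_. undefined) \<and> K = {} \<and> r = 0" for P f
  proof
    assume "(P,f) \<in> Cset l {} K r"
    then have h: "partition_on {} P" "f \<in> P \<rightarrow>\<^sub>E insert 1 K" "card {B\<in>P. f B = 1} = r"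
      "\<forall>j\<in>K. card {B\<in>P. f B = j} = 1" unfolding Cset_def by auto
    then have P: "P = {}" by (simp add: partition_on_empty)
    then show "P = {} \<and> f = (\<lambda>_. undefined) \<and> K = {} \<and> r = 0" using h by auto
  next
    assume "P = {} \<and> f = (\<lambda>_. undefined) \<and> K = {} \<and> r = 0"
    then show "(P,f) \<in> Cset l {} K r" unfolding Cset_def by (simp add: partition_on_empty restrict_def)
  qed
  then show ?thesis by auto
qed


lemma fiber_one:
  assumes A: "finite A" and K: "1 \<notin> K" and B: "B \<subseteq> A" "B \<noteq> {}" "l \<le> card B" and r: "r \<ge> 1"
  shows "bij_betw (\<lambda>(P,f). (P-{B}, restrict f (P-{B})))
     {x\<in>Cset l A K r. B \<in> fst x \<and> snd x B = 1} (Cset l (A-B) K (r-1))"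
proof (rule bij_betw_byWitness[where f' = "\<lambda>(Q,g). (insert B Q, g(B:=1))"])
  show "\<forall>x\<in>{x\<in>Cset l A K r. B \<in> fst x \<and> snd x B = 1}.
     (\<lambda>(Q,g). (insert B Q, g(B:=1))) ((\<lambda>(P,f). (P-{B}, restrict f (P-{B}))) x) = x"
  proof
    fix x assume x: "x \<in> {x\<in>Cset l A K r. B \<in> fst x \<and> snd x B = 1}"
    obtain P f where xe: "x = (P,f)" by fastforce
    have "f \<in> P \<rightarrow>\<^sub>E insert 1 K" "B \<in> P" "f B = 1" using x xe by (auto simp: Cset_def)
    then have "(restrict f (P-{B}))(B:=1) = f" by (auto simp: fun_eq_iff restrict_def PiE_def extensional_def)
    moreover have "insert B (P-{B}) = P" using \<open>B\<in>P\<close> by auto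
    ultimately show "(\<lambda>(Q,g). (insert B Q, g(B:=1))) ((\<lambda>(P,f). (P-{B}, restrict f (P-{B}))) x) = x"
      using xe by simp
  qed
next
  show "\<forall>y\<in>Cset l (A-B) K (r-1).
     (\<lambda>(P,f). (P-{B}, restrict f (P-{B}))) ((\<lambda>(Q,g). (insert B Q, g(B:=1))) y) = y"
  proof
    fix y assume y: "y \<in> Cset l (A-B) K (r-1)"
    obtain Q g where ye: "y = (Q,g)" by fastforce
    have Q: "partition_on (A-B) Q" "g \<in> Q \<rightarrow>\<^sub>E insert 1 K" using y ye by (auto simp: Cset_def)
    have "B \<notin> Q" using Q(1) B partition_onD1[OF Q(1)] by auto
    then have "insert B Q - {B} = Q" by auto
    moreover have "restrict (g(B:=1)) Q = g" using Q(2) \<open>B \<notin> Q\<close>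
      by (auto simp: fun_eq_iff restrict_def PiE_def extensional_def)
    ultimately show "(\<lambda>(P,f). (P-{B}, restrict f (P-{B}))) ((\<lambda>(Q,g). (insert B Q, g(B:=1))) y) = y"
      using ye by simp
  qed
next
  show "(\<lambda>(P,f). (P-{B}, restrict f (P-{B}))) ` {x\<in>Cset l A K r. B \<in> fst x \<and> snd x B = 1} \<subseteq> Cset l (A-B) K (r-1)"
  proof
    fix z assume "z \<in> (\<lambda>(P,f). (P-{B}, restrict f (P-{B}))) ` {x\<in>Cset l A K r. B \<in> fst x \<and> snd x B = 1}"
    then obtain P f where z: "z = (P-{B}, restrict f (P-{B}))" and
      P: "partition_on A P" "\<forall>C\<in>P. l \<le> card C" "f \<in> P \<rightarrow>\<^sub>E insert 1 K" "card {C\<in>P. f C = 1} = r"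
         "\<forall>j\<in>K. card {C\<in>P. f C = j} = 1" "B \<in> P" "f B = 1"
      by (auto simp: Cset_def)
    have fP: "finite P" using finite_elements[OF A P(1)] .
    have e1: "{C\<in>P-{B}. restrict f (P-{B}) C = 1} = {C\<in>P. f C = 1} - {B}" by auto
    have c1: "card {C\<in>P-{B}. restrict f (P-{B}) C = 1} = r - 1"
      unfolding e1 using fP P(4,6,7) by (subst card_Diff_singleton) auto
    have ej: "{C\<in>P-{B}. restrict f (P-{B}) C = j} = {C\<in>P. f C = j}" if "j \<in> K" for j
      using that K P(7) by auto
    show "z \<in> Cset l (A-B) K (r-1)"
      unfolding z Cset_def using partition_remove[OF P(1) P(6)] P(2,3,5) c1 ej
      by (auto simp: PiE_def Pi_def)
  qed
next
  show "(\<lambda>(Q,g). (insert B Q, g(B:=1))) ` Cset l (A-B) K (r-1) \<subseteq> {x\<in>Cset l A K r. B \<in> fst x \<and> snd x B = 1}"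
  proof
    fix z assume "z \<in> (\<lambda>(Q,g). (insert B Q, g(B:=1))) ` Cset l (A-B) K (r-1)"
    then obtain Q g where z: "z = (insert B Q, g(B:=1))" and
      Q: "partition_on (A-B) Q" "\<forall>C\<in>Q. l \<le> card C" "g \<in> Q \<rightarrow>\<^sub>E insert 1 K" "card {C\<in>Q. g C = 1} = r-1"
         "\<forall>j\<in>K. card {C\<in>Q. g C = j} = 1"
      by (auto simp: Cset_def)
    have "B \<notin> Q" using Q(1) B partition_onD1[OF Q(1)] by auto
    have fQ: "finite Q" using finite_elements[OF _ Q(1)] A by auto
    have e1: "{C\<in>insert B Q. (g(B:=1)) C = 1} = insert B {C\<in>Q. g C = 1}" using \<open>B \<notin> Q\<close> by auto
    have c1: "card {C\<in>insert B Q. (g(B:=1)) C = 1} = r"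
      unfolding e1 using fQ Q(4) r \<open>B \<notin> Q\<close> by simp
    have ej: "{C\<in>insert B Q. (g(B:=1)) C = j} = {C\<in>Q. g C = j}" if "j \<in> K" for j
      using that K \<open>B \<notin> Q\<close> by auto
    have ext: "g(B:=1) \<in> insert B Q \<rightarrow>\<^sub>E insert 1 K" using Q(3) \<open>B \<notin> Q\<close>
      by (auto simp: PiE_def Pi_def extensional_def)
    show "z \<in> {x\<in>Cset l A K r. B \<in> fst x \<and> snd x B = 1}"
      unfolding z Cset_def using partition_add[OF Q(1) B(1,2)] Q(2,5) B(3) c1 ej ext
      by auto
  qed
qed


lemma fiber_j:
  assumes A: "finite A" and K: "1 \<notin> K" and B: "B \<subseteq> A" "B \<noteq> {}" "l \<le> card B" and j: "j \<in> K"
  shows "bij_betw (\<lambda>(P,f). (P-{B}, restrict f (P-{B})))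
     {x\<in>Cset l A K r. B \<in> fst x \<and> snd x B = j} (Cset l (A-B) (K-{j}) r)"
proof (rule bij_betw_byWitness[where f' = "\<lambda>(Q,g). (insert B Q, g(B:=j))"])
  show "\<forall>x\<in>{x\<in>Cset l A K r. B \<in> fst x \<and> snd x B = j}.
     (\<lambda>(Q,g). (insert B Q, g(B:=j))) ((\<lambda>(P,f). (P-{B}, restrict f (P-{B}))) x) = x"
  proof
    fix x assume x: "x \<in> {x\<in>Cset l A K r. B \<in> fst x \<and> snd x B = j}"
    obtain P f where xe: "x = (P,f)" by fastforce
    have "f \<in> P \<rightarrow>\<^sub>E insert 1 K" "B \<in> P" "f B = j" using x xe by (auto simp: Cset_def)
    then have "(restrict f (P-{B}))(B:=j) = f" by (auto simp: fun_eq_iff restrict_def PiE_def extensional_def)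
    moreover have "insert B (P-{B}) = P" using \<open>B\<in>P\<close> by auto
    ultimately show "(\<lambda>(Q,g). (insert B Q, g(B:=j))) ((\<lambda>(P,f). (P-{B}, restrict f (P-{B}))) x) = x"
      using xe by simp
  qed
next
  show "\<forall>y\<in>Cset l (A-B) (K-{j}) r.
     (\<lambda>(P,f). (P-{B}, restrict f (P-{B}))) ((\<lambda>(Q,g). (insert B Q, g(B:=j))) y) = y"
  proof
    fix y assume y: "y \<in> Cset l (A-B) (K-{j}) r"
    obtain Q g where ye: "y = (Q,g)" by fastforce
    have Q: "partition_on (A-B) Q" "g \<in> Q \<rightarrow>\<^sub>E insert 1 (K-{j})" using y ye by (auto simp: Cset_def)
    have "B \<notin> Q" using Q(1) B partition_onD1[OF Q(1)] by auto
    then have "insert B Q - {B} = Q" by auto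
    moreover have "restrict (g(B:=j)) Q = g" using Q(2) \<open>B \<notin> Q\<close>
      by (auto simp: fun_eq_iff restrict_def PiE_def extensional_def)
    ultimately show "(\<lambda>(P,f). (P-{B}, restrict f (P-{B}))) ((\<lambda>(Q,g). (insert B Q, g(B:=j))) y) = y"
      using ye by simp
  qed
next
  show "(\<lambda>(P,f). (P-{B}, restrict f (P-{B}))) ` {x\<in>Cset l A K r. B \<in> fst x \<and> snd x B = j} \<subseteq> Cset l (A-B) (K-{j}) r"
  proof
    fix z assume "z \<in> (\<lambda>(P,f). (P-{B}, restrict f (P-{B}))) ` {x\<in>Cset l A K r. B \<in> fst x \<and> snd x B = j}"
    then obtain P f where z: "z = (P-{B}, restrict f (P-{B}))" and
      P: "partition_on A P" "\<forall>C\<in>P. l \<le> card C" "f \<in> P \<rightarrow>\<^sub>E insert 1 K" "card {C\<in>P. f C = 1} = r"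
         "\<forall>j\<in>K. card {C\<in>P. f C = j} = 1" "B \<in> P" "f B = j"
      by (auto simp: Cset_def)
    have fP: "finite P" using finite_elements[OF A P(1)] .
    have "card {C\<in>P. f C = j} = 1" using P(5) j by auto
    then obtain C0 where "{C\<in>P. f C = j} = {C0}" by (auto simp: card_1_singleton_iff)
    then have sj: "{C\<in>P. f C = j} = {B}" using P(6,7) by auto
    have vals: "restrict f (P-{B}) \<in> (P-{B}) \<rightarrow>\<^sub>E insert 1 (K-{j})"
    proof -
      have "f C \<in> insert 1 (K-{j})" if "C \<in> P - {B}" for C
        using that P(3) sj by (auto simp: PiE_def Pi_def)
      then show ?thesis by auto
    qed
    have e1: "{C\<in>P-{B}. restrict f (P-{B}) C = 1} = {C\<in>P. f C = 1}" using K j P(7) by auto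
    have ej: "{C\<in>P-{B}. restrict f (P-{B}) C = j'} = {C\<in>P. f C = j'}" if "j' \<in> K-{j}" for j'
      using that P(7) by auto
    show "z \<in> Cset l (A-B) (K-{j}) r"
      unfolding z Cset_def using partition_remove[OF P(1) P(6)] P(2,4,5) e1 ej vals
      by auto
  qed
next
  show "(\<lambda>(Q,g). (insert B Q, g(B:=j))) ` Cset l (A-B) (K-{j}) r \<subseteq> {x\<in>Cset l A K r. B \<in> fst x \<and> snd x B = j}"
  proof
    fix z assume "z \<in> (\<lambda>(Q,g). (insert B Q, g(B:=j))) ` Cset l (A-B) (K-{j}) r"
    then obtain Q g where z: "z = (insert B Q, g(B:=j))" and
      Q: "partition_on (A-B) Q" "\<forall>C\<in>Q. l \<le> card C" "g \<in> Q \<rightarrow>\<^sub>E insert 1 (K-{j})" "card {C\<in>Q. g C = 1} = r"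
         "\<forall>j'\<in>K-{j}. card {C\<in>Q. g C = j'} = 1"
      by (auto simp: Cset_def)
    have "B \<notin> Q" using Q(1) B partition_onD1[OF Q(1)] by auto
    have j1: "j \<noteq> 1" using K j by auto
    have e1: "{C\<in>insert B Q. (g(B:=j)) C = 1} = {C\<in>Q. g C = 1}" using \<open>B \<notin> Q\<close> j1 by auto
    have ejj: "{C\<in>insert B Q. (g(B:=j)) C = j} = {B}" using \<open>B \<notin> Q\<close> Q(3) j1
      by (auto simp: PiE_def Pi_def)
    have ej: "{C\<in>insert B Q. (g(B:=j)) C = j'} = {C\<in>Q. g C = j'}" if "j' \<in> K-{j}" for j'
      using that \<open>B \<notin> Q\<close> by auto
    have cK: "\<forall>j'\<in>K. card {C\<in>insert B Q. (g(B:=j)) C = j'} = 1"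
    proof
      fix j' assume "j' \<in> K"
      then show "card {C\<in>insert B Q. (g(B:=j)) C = j'} = 1"
        using ejj ej Q(5) by (cases "j' = j") auto
    qed
    have ext: "g(B:=j) \<in> insert B Q \<rightarrow>\<^sub>E insert 1 K" using Q(3) \<open>B \<notin> Q\<close> j
      by (auto simp: PiE_def Pi_def extensional_def)
    show "z \<in> {x\<in>Cset l A K r. B \<in> fst x \<and> snd x B = j}"
      unfolding z Cset_def using partition_add[OF Q(1) B(1,2)] Q(2,4) B(3) e1 cK ext
      by auto
  qed
qed


lemma fiber_zero:
  assumes A: "finite A"
  shows "{x\<in>Cset l A K 0. B \<in> fst x \<and> snd x B = 1} = {}"
proof -
  have False if "(P,f) \<in> Cset l A K 0" "B \<in> P" "f B = 1" for P f
  proof -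
    have "partition_on A P" "card {C\<in>P. f C = 1} = 0" using that by (auto simp: Cset_def)
    moreover have "finite P" using finite_elements[OF A \<open>partition_on A P\<close>] .
    ultimately show False using that(2,3) by auto
  qed
  then show ?thesis by fastforce
qed

lemma decomp:
  assumes A: "finite A" and K: "finite K" "1 \<notin> K" and a: "a \<in> A"
  shows "card (Cset l A K r) = (\<Sum>B\<in>{B. B \<subseteq> A \<and> a \<in> B \<and> l \<le> card B}.
      (\<Sum>j\<in>K. card (Cset l (A-B) (K-{j}) r)) + (if r = 0 then 0 else card (Cset l (A-B) K (r-1))))"
proof -
  define Bs where "Bs = {B. B \<subseteq> A \<and> a \<in> B \<and> l \<le> card B}"
  define X where "X = (\<lambda>(B,j). {x\<in>Cset l A K r. B \<in> fst x \<and> snd x B = j})"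
  have fBs: "finite Bs" unfolding Bs_def using A by (auto intro: finite_subset[of _ "Pow A"])
  have cover: "Cset l A K r = (\<Union>p\<in>Bs \<times> insert 1 K. X p)"
  proof
    show "Cset l A K r \<subseteq> (\<Union>p\<in>Bs \<times> insert 1 K. X p)"
    proof
      fix x assume x: "x \<in> Cset l A K r"
      obtain P f where xe: "x = (P,f)" by fastforce
      have P: "partition_on A P" "\<forall>C\<in>P. l \<le> card C" "f \<in> P \<rightarrow>\<^sub>E insert 1 K"
        using x xe by (auto simp: Cset_def)
      obtain B where "B \<in> P" "a \<in> B" using partition_onD1[OF P(1)] a by auto
      moreover have "B \<subseteq> A" using partition_onD1[OF P(1)] \<open>B \<in> P\<close> by auto
      ultimately have "(B, f B) \<in> Bs \<times> insert 1 K" "x \<in> X (B, f B)"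
        using P x xe unfolding Bs_def X_def by (auto simp: PiE_def Pi_def)
      then show "x \<in> (\<Union>p\<in>Bs \<times> insert 1 K. X p)" by blast
    qed
  qed (auto simp: X_def)
  have disj: "\<forall>p\<in>Bs \<times> insert 1 K. \<forall>q\<in>Bs \<times> insert 1 K. p \<noteq> q \<longrightarrow> X p \<inter> X q = {}"
  proof (intro ballI impI)
    fix p q assume p: "p \<in> Bs \<times> insert 1 K" and q: "q \<in> Bs \<times> insert 1 K" and pq: "p \<noteq> q"
    obtain B j B' j' where pe: "p = (B,j)" and qe: "q = (B',j')" by fastforce
    show "X p \<inter> X q = {}"
    proof (rule ccontr)
      assume "X p \<inter> X q \<noteq> {}"
      then obtain x where x: "x \<in> X p" "x \<in> X q" by blast
      obtain P f where xe: "x = (P,f)" by fastforce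
      have "(P,f) \<in> Cset l A K r" "B \<in> P" "B' \<in> P" "f B = j" "f B' = j'"
        using x unfolding xe pe qe X_def by auto
      then have "partition_on A P" by (auto simp: Cset_def)
      have "a \<in> B" "a \<in> B'" using p q pe qe by (auto simp: Bs_def)
      then have "B = B'" using partition_onD2[OF \<open>partition_on A P\<close>] \<open>B \<in> P\<close> \<open>B' \<in> P\<close>
        unfolding disjoint_def by blast
      then show False using pq pe qe \<open>f B = j\<close> \<open>f B' = j'\<close> by simp
    qed
  qed
  have fX: "\<forall>p\<in>Bs \<times> insert 1 K. finite (X p)"
    using finite_Cset[OF A K(1)] by (auto simp: X_def split: prod.splits)
  have "card (Cset l A K r) = (\<Sum>p\<in>Bs \<times> insert 1 K. card (X p))"
    unfolding cover using fBs K(1) fX disj by (subst card_UN_disjoint) auto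
  also have "\<dots> = (\<Sum>B\<in>Bs. \<Sum>j\<in>insert 1 K. card (X (B,j)))"
    by (simp add: sum.cartesian_product)
  also have "\<dots> = (\<Sum>B\<in>Bs. (\<Sum>j\<in>K. card (Cset l (A-B) (K-{j}) r)) + (if r = 0 then 0 else card (Cset l (A-B) K (r-1))))"
  proof (rule sum.cong[OF refl])
    fix B assume B: "B \<in> Bs"
    then have B': "B \<subseteq> A" "B \<noteq> {}" "l \<le> card B" by (auto simp: Bs_def)
    have "(\<Sum>j\<in>insert 1 K. card (X (B,j))) = card (X (B,1)) + (\<Sum>j\<in>K. card (X (B,j)))"
      using K by simp
    moreover have "card (X (B,1)) = (if r = 0 then 0 else card (Cset l (A-B) K (r-1)))"
    proof (cases "r = 0")
      case True
      have "X (B,1) = {}" unfolding X_def True using fiber_zero[OF A, of l K B] by (simp only: prod.case)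
      then show ?thesis using True by simp
    next
      case False then show ?thesis using bij_betw_same_card[OF fiber_one[OF A K(2) B', of r]]
        by (simp add: X_def)
    qed
    moreover have "card (X (B,j)) = card (Cset l (A-B) (K-{j}) r)" if "j \<in> K" for j
      using bij_betw_same_card[OF fiber_j[OF A K(2) B' that, of r]] by (simp add: X_def)
    ultimately show "(\<Sum>j\<in>insert 1 K. card (X (B,j))) = (\<Sum>j\<in>K. card (Cset l (A-B) (K-{j}) r)) + (if r = 0 then 0 else card (Cset l (A-B) K (r-1)))"
      by simp
  qed
  finally show ?thesis unfolding Bs_def .
qed

lemma count_sum:
  assumes A: "finite A" and a: "a \<in> A" and n: "card A = Suc n"
  shows "(\<Sum>B\<in>{B. B \<subseteq> A \<and> a \<in> B \<and> l \<le> card B}. h (card B)) = (\<Sum>i=l-1..n. (n choose i) * h (Suc i))"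
proof -
  define Ds where "Ds = {D. D \<subseteq> A - {a} \<and> l - 1 \<le> card D}"
  have fA': "finite (A - {a})" using A by auto
  have cA': "card (A - {a}) = n" using A a n by simp
  have inj: "inj_on (insert a) Ds" unfolding Ds_def inj_on_def by blast
  have fD: "finite D" if "D \<in> Ds" for D using that fA' unfolding Ds_def by (auto intro: finite_subset)
  have img: "insert a ` Ds = {B. B \<subseteq> A \<and> a \<in> B \<and> l \<le> card B}"
  proof
    show "insert a ` Ds \<subseteq> {B. B \<subseteq> A \<and> a \<in> B \<and> l \<le> card B}"
    proof
      fix B assume "B \<in> insert a ` Ds"
      then obtain D where D: "D \<in> Ds" "B = insert a D" by auto
      have "a \<notin> D" using D unfolding Ds_def by auto
      then show "B \<in> {B. B \<subseteq> A \<and> a \<in> B \<and> l \<le> card B}" using D fD[OF D(1)] a unfolding Ds_def by auto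
    qed
  next
    show "{B. B \<subseteq> A \<and> a \<in> B \<and> l \<le> card B} \<subseteq> insert a ` Ds"
    proof
      fix B assume B: "B \<in> {B. B \<subseteq> A \<and> a \<in> B \<and> l \<le> card B}"
      then have fB: "finite B" using A by (auto intro: finite_subset)
      have "B - {a} \<in> Ds" using B fB unfolding Ds_def by auto
      moreover have "B = insert a (B - {a})" using B by auto
      ultimately show "B \<in> insert a ` Ds" by blast
    qed
  qed
  have "(\<Sum>B\<in>{B. B \<subseteq> A \<and> a \<in> B \<and> l \<le> card B}. h (card B)) = (\<Sum>D\<in>Ds. h (card (insert a D)))"
    unfolding img[symmetric] by (rule sum.reindex[OF inj, unfolded comp_def])
  also have "\<dots> = (\<Sum>D\<in>Ds. h (Suc (card D)))"
  proof (rule sum.cong[OF refl])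
    fix D assume D: "D \<in> Ds"
    then have "a \<notin> D" unfolding Ds_def by auto
    then show "h (card (insert a D)) = h (Suc (card D))"
      using fD[OF D] by simp
  qed
  also have "\<dots> = (\<Sum>i=l-1..n. \<Sum>D\<in>{D\<in>Ds. card D = i}. h (Suc (card D)))"
  proof (rule sum.group[symmetric])
    show "finite Ds" unfolding Ds_def by (rule finite_subset[of _ "Pow (A - {a})"]) (use fA' in auto)
    show "card ` Ds \<subseteq> {l-1..n}"
    proof
      fix c assume "c \<in> card ` Ds"
      then obtain D where D: "D \<in> Ds" "c = card D" by blast
      then have "D \<subseteq> A - {a}" "l - 1 \<le> card D" unfolding Ds_def by auto
      then have "card D \<le> n" using card_mono[OF fA'] cA' by metis
      then show "c \<in> {l-1..n}" using D \<open>l - 1 \<le> card D\<close> by simp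
    qed
  qed simp
  also have "\<dots> = (\<Sum>i=l-1..n. (n choose i) * h (Suc i))"
  proof (rule sum.cong[OF refl])
    fix i assume i: "i \<in> {l-1..n}"
    have "{D\<in>Ds. card D = i} = {D. D \<subseteq> A - {a} \<and> card D = i}" using i unfolding Ds_def by auto
    then have "card {D\<in>Ds. card D = i} = n choose i" using n_subsets[OF fA', of i] cA' by simp
    moreover have "(\<Sum>D\<in>{D\<in>Ds. card D = i}. h (Suc (card D))) = card {D\<in>Ds. card D = i} * h (Suc i)"
      by simp
    ultimately show "(\<Sum>D\<in>{D\<in>Ds. card D = i}. h (Suc (card D))) = (n choose i) * h (Suc i)" by simp
  qed
  finally show ?thesis .
qed


lemma C_eq_F:
  "finite A \<Longrightarrow> finite K \<Longrightarrow> 1 \<notin> K \<Longrightarrow> card (Cset l A K r) = F l (card A) (card K) r"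
proof (induction "card A" arbitrary: A K r rule: less_induct)
  case less
  show ?case
  proof (cases "A = {}")
    case True then show ?thesis using less.prems by (simp add: Cset_empty)
  next
    case False
    then obtain a where a: "a \<in> A" by auto
    obtain n where n: "card A = Suc n" using less.prems False by (cases "card A") auto
    define h where "h = (\<lambda>s. card K * F l (Suc n - s) (card K - 1) r
        + (if r = 0 then 0 else F l (Suc n - s) (card K) (r-1)))"
    have "card (Cset l A K r) = (\<Sum>B\<in>{B. B \<subseteq> A \<and> a \<in> B \<and> l \<le> card B}.
      (\<Sum>j\<in>K. card (Cset l (A-B) (K-{j}) r)) + (if r = 0 then 0 else card (Cset l (A-B) K (r-1))))"
      using decomp[OF less.prems(1,2,3) a] .
    also have "\<dots> = (\<Sum>B\<in>{B. B \<subseteq> A \<and> a \<in> B \<and> l \<le> card B}. h (card B))"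
    proof (rule sum.cong[OF refl])
      fix B assume B: "B \<in> {B. B \<subseteq> A \<and> a \<in> B \<and> l \<le> card B}"
      have fB: "finite B" using B less.prems(1) by (auto intro: finite_subset)
      have cAB: "card (A - B) = Suc n - card B" using B fB n by (simp add: card_Diff_subset)
      have lt: "card (A - B) < card A" using B less.prems(1) by (intro psubset_card_mono) auto
      have fAB: "finite (A - B)" using less.prems(1) by auto
      have "card (Cset l (A-B) (K-{j}) r) = F l (Suc n - card B) (card K - 1) r" if j: "j \<in> K" for j
        using less.hyps[OF lt fAB _ _, of "K - {j}" r] less.prems j cAB by simp
      then have s1: "(\<Sum>j\<in>K. card (Cset l (A-B) (K-{j}) r)) = card K * F l (Suc n - card B) (card K - 1) r"
        by simp
      have s2: "card (Cset l (A-B) K (r-1)) = F l (Suc n - card B) (card K) (r-1)"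
        using less.hyps[OF lt fAB less.prems(2,3), of "r-1"] cAB by simp
      show "(\<Sum>j\<in>K. card (Cset l (A-B) (K-{j}) r)) + (if r = 0 then 0 else card (Cset l (A-B) K (r-1)))
          = h (card B)" unfolding h_def s1 s2 by simp
    qed
    also have "\<dots> = (\<Sum>i=l-1..n. (n choose i) * h (Suc i))"
      using count_sum[OF less.prems(1) a n] .
    also have "\<dots> = F l (card A) (card K) r" unfolding n h_def diff_Suc_Suc by simp
    finally show ?thesis .
  qed
qed

lemma S_eq: assumes "k \<ge> 1" shows "S_geq l N k r = F l N (k-1) r"
proof -
  have "insert 1 {2..k} = {1..k}" using assms by auto
  then have "S_geq l N k r = card (Cset l {1..N} {2..k} r)"
    unfolding S_geq_def Cset_def by simp
  also have "\<dots> = F l N (k-1) r" by (subst C_eq_F) auto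
  finally show ?thesis .
qed

theorem mainTheorem8:
  fixes n k r l :: nat
  assumes "n \<ge> 1" and "k \<ge> 1" and "r \<ge> 1" and "l \<ge> 1"
  shows "S_geq l n k r =
    (\<Sum>i=l-1..n-1. (n-1 choose i) *
        ((k-1) * S_geq l (n-i-1) (k-1) r + S_geq l (n-i-1) k (r-1)))"
proof -
  obtain m where m: "n = Suc m" using assms(1) by (cases n) auto
  have "S_geq l n k r = F l (Suc m) (k-1) r" using S_eq[OF assms(2)] m by simp
  also have "\<dots> = (\<Sum>i=l-1..m. (m choose i) * ((k-1) * F l (m-i) (k-1-1) r + F l (m-i) (k-1) (r-1)))"
    using assms(3) by simp
  also have "\<dots> = (\<Sum>i=l-1..n-1. (n-1 choose i) *
        ((k-1) * S_geq l (n-i-1) (k-1) r + S_geq l (n-i-1) k (r-1)))"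
  proof (rule sum.cong)
    show "{l-1..m} = {l-1..n-1}" using m by simp
  next
    fix i assume "i \<in> {l-1..n-1}"
    have e1: "(k-1) * F l (m-i) (k-1-1) r = (k-1) * S_geq l (n-i-1) (k-1) r"
    proof (cases "k = 1")
      case False then show ?thesis using S_eq[of "k-1" l "m-i" r] assms(2) m by simp
    qed simp
    have e2: "F l (m-i) (k-1) (r-1) = S_geq l (n-i-1) k (r-1)" using S_eq[OF assms(2)] m by simp
    show "(m choose i) * ((k-1) * F l (m-i) (k-1-1) r + F l (m-i) (k-1) (r-1)) =
        (n-1 choose i) * ((k-1) * S_geq l (n-i-1) (k-1) r + S_geq l (n-i-1) k (r-1))"
      using e1 e2 m by simp
  qed
  finally show ?thesis .
qed

end
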